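(* For every instance of DCIC there exists a threshold $\tau\ge 0$ such that, for every agent utility distribution and every best response of the agent, the SPMI with threshold $\tau$ yields principal's expected utility, excluding the delegation cost, of at least $\frac12\,\mathbb E\big[\max_{i\in[n]}(X_i-c_i)^+\big]$.
   Context: Delegated choice with inspection cost (DCIC). There are $n$ alternatives indexed by $[n]=\{1,\dots,n\}$. Each alternative $i$ has a principal's utility $X_i\ge 0$ and an agent's utility $Y_i\ge 0$; the pairs $(X_i,Y_i)$, $i\in[n]$, are mutually independent random vectors (with $X_i$ and $Y_i$ possibly dependent); the principal knows the distributions of the $X_i$. Alternative $i$ has a deterministic inspection cost $c_i\ge 0$. The SPMI (single-proposal mechanism with inspection) with threshold $\tau$ is the delegating mechanism with signal set $[n]\cup\{\perp\}$: the agent observes all $(X_i,Y_i)$ and sends a signal; on signal $j\in[n]$ the principal inspects $j$ (paying $c_j$) and selects $j$ iff $X_j-c_j\ge\tau$ (otherwise selects nothing); on signal $\perp$ nothing is inspected or selected. The agent's utility is $Y_k$ if $k$ is selected and $0$ if nothing is selected; he sends a signal maximizing it, breaking ties in favor of the principal (among signals giving him equal utility he sends one maximizing the principal's realized utility $\sum_i(\mathbf A_iX_i-\mathbf I_ic_i)$, where $\mathbf A_i,\mathbf I_i$ indicate selection/inspection of $i$). $(z)^+=\max(z,0)$. *)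

theory Defs
  imports "HOL-Probability.Probability"
begin

text \<open>Signals: None is the null signal (bottom), Some j proposes alternative j.
  x, y are the realized principal / agent utilities, c the inspection costs.\<close>

definition valid_signal :: "nat \<Rightarrow> nat option \<Rightarrow> bool" where
  "valid_signal n s \<longleftrightarrow> s = None \<or> (\<exists>j\<in>{1..n}. s = Some j)"

definition spmi_agent_util ::
  "real \<Rightarrow> (nat \<Rightarrow> real) \<Rightarrow> (nat \<Rightarrow> real) \<Rightarrow> (nat \<Rightarrow> real) \<Rightarrow> nat option \<Rightarrow> real" where
  "spmi_agent_util tau c x y s =
     (case s of None \<Rightarrow> 0 | Some j \<Rightarrow> (if x j - c j \<ge> tau then y j else 0))"

text \<open>Principal's realized utility (sum of A_i X_i - I_i c_i) under the SPMI.\<close>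
definition spmi_principal_util ::
  "real \<Rightarrow> (nat \<Rightarrow> real) \<Rightarrow> (nat \<Rightarrow> real) \<Rightarrow> nat option \<Rightarrow> real" where
  "spmi_principal_util tau c x s =
     (case s of None \<Rightarrow> 0 | Some j \<Rightarrow> (if x j - c j \<ge> tau then x j else 0) - c j)"

text \<open>Best response of the agent (ties broken in favour of the principal).\<close>
definition spmi_best_response ::
  "nat \<Rightarrow> real \<Rightarrow> (nat \<Rightarrow> real) \<Rightarrow> (nat \<Rightarrow> real) \<Rightarrow> (nat \<Rightarrow> real) \<Rightarrow> nat option \<Rightarrow> bool" where
  "spmi_best_response n tau c x y s \<longleftrightarrow>
     valid_signal n s \<and>
     (\<forall>s'. valid_signal n s' \<longrightarrow> spmi_agent_util tau c x y s' \<le> spmi_agent_util tau c x y s) \<and>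
     (\<forall>s'. valid_signal n s' \<and> spmi_agent_util tau c x y s' = spmi_agent_util tau c x y s
            \<longrightarrow> spmi_principal_util tau c x s' \<le> spmi_principal_util tau c x s)"

end

theory Submission imports Defs begin


lemma pu_ge_acc:
  assumes br: "spmi_best_response n tau c x y s"
    and ynn: "\<forall>i\<in>{1..n}. y i \<ge> 0"
    and k: "k \<in> {1..n}" "x k - c k \<ge> tau"
  shows "\<exists>j\<in>{1..n}. x j - c j \<ge> tau \<and> spmi_principal_util tau c x s \<ge> x j - c j"
proof -
  have v: "valid_signal n s" and mx: "\<And>s'. valid_signal n s' \<Longrightarrow> spmi_agent_util tau c x y s' \<le> spmi_agent_util tau c x y s"
    and tb: "\<And>s'. valid_signal n s' \<Longrightarrow> spmi_agent_util tau c x y s' = spmi_agent_util tau c x y s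
            \<Longrightarrow> spmi_principal_util tau c x s' \<le> spmi_principal_util tau c x s"
    using br unfolding spmi_best_response_def by blast+
  have vk: "valid_signal n (Some k)" using k unfolding valid_signal_def by auto
  have vn: "valid_signal n None" unfolding valid_signal_def by auto
  have u0: "spmi_agent_util tau c x y s \<ge> 0" using mx[OF vn] by (simp add: spmi_agent_util_def)
  show ?thesis
  proof (cases "spmi_agent_util tau c x y s > 0")
    case True
    then obtain j where sj: "s = Some j" and j: "j \<in> {1..n}" using v unfolding valid_signal_def
      by (auto simp: spmi_agent_util_def)
    have acc: "x j - c j \<ge> tau" using True sj by (auto simp: spmi_agent_util_def split: if_splits)
    show ?thesis using acc j sj by (intro bexI[of _ j]) (auto simp: spmi_principal_util_def)
  next
    case False
    have "spmi_agent_util tau c x y (Some k) = y k" using k by (simp add: spmi_agent_util_def)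
    moreover have "y k \<ge> 0" using ynn k by auto
    ultimately have "spmi_agent_util tau c x y (Some k) = spmi_agent_util tau c x y s"
      using mx[OF vk] False u0 by linarith
    from tb[OF vk this] have "spmi_principal_util tau c x (Some k) \<le> spmi_principal_util tau c x s" .
    then show ?thesis using k by (intro bexI[of _ k]) (auto simp: spmi_principal_util_def)
  qed
qed

lemma pu_nonneg:
  assumes br: "spmi_best_response n tau c x y s"
    and none: "\<forall>j\<in>{1..n}. x j - c j < tau"
  shows "spmi_principal_util tau c x s \<ge> 0"
proof -
  have v: "valid_signal n s"
    and tb: "\<And>s'. valid_signal n s' \<Longrightarrow> spmi_agent_util tau c x y s' = spmi_agent_util tau c x y s
            \<Longrightarrow> spmi_principal_util tau c x s' \<le> spmi_principal_util tau c x s"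
    using br unfolding spmi_best_response_def by blast+
  have vn: "valid_signal n None" unfolding valid_signal_def by auto
  have "spmi_agent_util tau c x y s = 0" using v none
    by (auto simp: valid_signal_def spmi_agent_util_def)
  then have "spmi_agent_util tau c x y None = spmi_agent_util tau c x y s"
    by (simp add: spmi_agent_util_def)
  from tb[OF vn this] show ?thesis by (simp add: spmi_principal_util_def)
qed



lemma F_integrable:
  assumes "prob_space D" "sets D = sets borel" "integrable D (\<lambda>x. x)"
  shows "integrable D (\<lambda>x. max 0 (x - a - t :: real))"
proof -
  interpret prob_space D by fact
  have [measurable]: "(\<lambda>x. x) \<in> borel_measurable D" using assms(3) by auto
  show ?thesis using assms(3) by (intro integrable_max integrable_diff) auto
qed

lemma F_lip:
  assumes "prob_space D" "sets D = sets borel" "integrable D (\<lambda>x. x)"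
  shows "(\<integral>x. max 0 (x - a - t) \<partial>D) \<le> (\<integral>x. max 0 (x - a - s :: real) \<partial>D) + \<bar>t - s\<bar>"
proof -
  interpret prob_space D by fact
  have "(\<integral>x. max 0 (x - a - t) \<partial>D) \<le> (\<integral>x. max 0 (x - a - s) + \<bar>t - s\<bar> \<partial>D)"
    by (rule integral_mono) (auto intro!: F_integrable[OF assms] integrable_add)
  also have "\<dots> = (\<integral>x. max 0 (x - a - s :: real) \<partial>D) + \<bar>t - s\<bar>"
    using Bochner_Integration.integral_add[OF F_integrable[OF assms, of a s] integrable_const[of "\<bar>t - s\<bar>"]]
    by (simp add: prob_space)
  finally show ?thesis .
qed

lemma F_anti:
  assumes "prob_space D" "sets D = sets borel" "integrable D (\<lambda>x. x)" "s \<le> t"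
  shows "(\<integral>x. max 0 (x - a - t) \<partial>D) \<le> (\<integral>x. max 0 (x - a - s :: real) \<partial>D)"
  by (intro integral_mono F_integrable[OF assms(1-3)]) (use assms(4) in auto)

lemma tau_exists:
  fixes n :: nat and c :: "nat \<Rightarrow> real" and D :: "nat \<Rightarrow> real measure"
  assumes D_prob: "\<forall>i\<in>{1..n}. prob_space (D i) \<and> sets (D i) = sets borel"
    and D_mean: "\<forall>i\<in>{1..n}. integrable (D i) (\<lambda>x. x)"
  shows "\<exists>tau\<ge>0. tau = (\<Sum>i\<in>{1..n}. \<integral>x. max 0 (x - c i - tau) \<partial>D i)"
proof -
  define S where "S t = (\<Sum>i\<in>{1..n}. \<integral>x. max 0 (x - c i - t) \<partial>D i)" for t
  have cont: "continuous_on UNIV S"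
    unfolding S_def
  proof (intro continuous_on_sum)
    fix i assume i: "i \<in> {1..n}"
    have "1-lipschitz_on UNIV (\<lambda>t. \<integral>x. max 0 (x - c i - t) \<partial>D i)"
    proof (rule lipschitz_onI)
      fix t s :: real
      have "(\<integral>x. max 0 (x - c i - t) \<partial>D i) \<le> (\<integral>x. max 0 (x - c i - s) \<partial>D i) + \<bar>t - s\<bar>"
        "(\<integral>x. max 0 (x - c i - s) \<partial>D i) \<le> (\<integral>x. max 0 (x - c i - t) \<partial>D i) + \<bar>s - t\<bar>"
        using D_prob D_mean i by (auto intro!: F_lip)
      then show "dist (\<integral>x. max 0 (x - c i - t) \<partial>D i) (\<integral>x. max 0 (x - c i - s) \<partial>D i) \<le> 1 * dist t s"
        by (simp add: dist_real_def abs_le_iff abs_minus_commute)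
    qed simp
    then show "continuous_on UNIV (\<lambda>t. \<integral>x. max 0 (x - c i - t) \<partial>D i)"
      by (rule lipschitz_on_continuous_on)
  qed
  have S0: "S 0 \<ge> 0" unfolding S_def by (intro sum_nonneg integral_nonneg) auto
  have SS': "S t \<le> S 0" if "t \<ge> 0" for t unfolding S_def
    by (intro sum_mono F_anti) (use D_prob D_mean that in auto)
  have SS: "S (S 0) \<le> S 0" using SS'[OF S0] .
  have "\<exists>t. 0 \<le> t \<and> t \<le> S 0 \<and> (\<lambda>t. t - S t) t = 0"
    by (rule IVT') (use S0 SS in \<open>auto intro!: continuous_on_diff continuous_on_id continuous_on_subset[OF cont]\<close>)
  then show ?thesis unfolding S_def by auto
qed


lemma pointwise:
  fixes I :: "nat set" and n :: nat and x c :: "nat \<Rightarrow> real" and tau :: real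
  defines "I \<equiv> {1..n}"
  defines "b \<equiv> \<lambda>j. (if x j - c j < tau then 1 else 0 :: real)"
  assumes br: "spmi_best_response n tau c x y s"
    and ynn: "\<forall>i\<in>{1..n}. y i \<ge> 0" and tau: "tau \<ge> 0"
  shows "spmi_principal_util tau c x s \<ge>
     tau * (1 - (\<Prod>j\<in>I. b j)) + (\<Sum>i\<in>I. max 0 (x i - c i - tau) * (\<Prod>j\<in>I-{i}. b j))"
proof -
  define A where "A = {j\<in>I. x j - c j \<ge> tau}"
  have fI: "finite I" unfolding I_def by simp
  have trm: "max 0 (x i - c i - tau) * (\<Prod>j\<in>I-{i}. b j) = (if A = {i} then x i - c i - tau else 0)"
    if i: "i \<in> I" for i
  proof (cases "i \<in> A")
    case False then show ?thesis using i unfolding A_def by auto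
  next
    case True
    show ?thesis
    proof (cases "A = {i}")
      case True
      have "b j = 1" if j: "j \<in> I - {i}" for j
      proof -
        have "j \<notin> A" using j True by auto
        then have "\<not> tau \<le> x j - c j" using j unfolding A_def by auto
        then show ?thesis unfolding b_def by simp
      qed
      then have "(\<Prod>j\<in>I-{i}. b j) = 1" by simp
      then show ?thesis using True \<open>i \<in> A\<close> by (auto simp: A_def)
    next
      case False
      then obtain k where "k \<in> A" "k \<noteq> i" using True by blast
      then have kk: "k \<in> I - {i}" "b k = 0" unfolding A_def b_def by auto
      then have "(\<Prod>j\<in>I-{i}. b j) = 0" using fI
        by (metis finite_Diff prod_zero_iff)
      then show ?thesis using False by simp
    qed
  qed
  show ?thesis
  proof (cases "A = {}")
    case True
    then have "\<forall>j\<in>{1..n}. x j - c j < tau" unfolding A_def I_def by auto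
    then have pu: "spmi_principal_util tau c x s \<ge> 0" using pu_nonneg[OF br] by blast
    have "b j = 1" if j: "j \<in> I" for j
    proof -
      have "j \<notin> A" using j True by auto
      then have "\<not> tau \<le> x j - c j" using j unfolding A_def by auto
      then show ?thesis unfolding b_def by simp
    qed
    then have "(\<Prod>j\<in>I. b j) = 1" by simp
    moreover have "(\<Sum>i\<in>I. max 0 (x i - c i - tau) * (\<Prod>j\<in>I-{i}. b j)) = 0"
      using trm True by (auto intro!: sum.neutral)
    ultimately show ?thesis using pu by simp
  next
    case False
    then obtain k where k: "k \<in> A" by blast
    have kk: "k \<in> I" "b k = 0" using k unfolding A_def b_def by auto
    have p0: "(\<Prod>j\<in>I. b j) = 0" using fI kk
      by (metis prod_zero_iff)
    obtain j where j: "j \<in> {1..n}" "x j - c j \<ge> tau" and pj: "spmi_principal_util tau c x s \<ge> x j - c j"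
      using pu_ge_acc[OF br ynn, of k] k unfolding A_def I_def by auto
    have jA: "j \<in> A" using j unfolding A_def I_def by auto
    have "(\<Sum>i\<in>I. max 0 (x i - c i - tau) * (\<Prod>j\<in>I-{i}. b j)) =
          (\<Sum>i\<in>I. (if A = {i} then x i - c i - tau else 0))"
      using trm by (auto intro!: sum.cong)
    also have "\<dots> \<le> spmi_principal_util tau c x s - tau"
    proof (cases "\<exists>i. A = {i}")
      case True
      then obtain i where Ai: "A = {i}" by blast
      then have iI: "i \<in> I" unfolding A_def by auto
      have "(\<Sum>i'\<in>I. (if A = {i'} then x i' - c i' - tau else 0)) = (\<Sum>i'\<in>I. (if i' = i then x i' - c i' - tau else 0))"
        using Ai by (intro sum.cong) auto
      also have "\<dots> = x i - c i - tau" using iI fI by simp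
      finally show ?thesis using pj jA Ai by simp
    next
      case False
      then have "(\<Sum>i'\<in>I. (if A = {i'} then x i' - c i' - tau else 0)) = 0" by (auto intro!: sum.neutral)
      then show ?thesis using pj j by simp
    qed
    finally show ?thesis using p0 by simp
  qed
qed



theorem mainTheorem8:
  fixes n :: nat and c :: "nat \<Rightarrow> real" and D :: "nat \<Rightarrow> real measure"
  assumes cost_nonneg: "\<forall>i\<in>{1..n}. c i \<ge> 0"
    and D_prob: "\<forall>i\<in>{1..n}. prob_space (D i) \<and> sets (D i) = sets borel"
    and D_nonneg: "\<forall>i\<in>{1..n}. AE x in D i. x \<ge> 0"
    and D_mean: "\<forall>i\<in>{1..n}. integrable (D i) (\<lambda>x. x)"
  shows "\<exists>tau\<ge>0. \<forall>(M :: 'a measure) (X :: nat \<Rightarrow> 'a \<Rightarrow> real) (Y :: nat \<Rightarrow> 'a \<Rightarrow> real)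
            (\<sigma> :: (nat \<Rightarrow> real) \<Rightarrow> (nat \<Rightarrow> real) \<Rightarrow> nat option).
     prob_space M \<and>
     (\<forall>i\<in>{1..n}. X i \<in> borel_measurable M \<and> Y i \<in> borel_measurable M \<and>
                  distr M borel (X i) = D i \<and>
                  (\<forall>\<omega>\<in>space M. X i \<omega> \<ge> 0 \<and> Y i \<omega> \<ge> 0)) \<and>
     prob_space.indep_vars M (\<lambda>_. borel \<Otimes>\<^sub>M borel) (\<lambda>i \<omega>. (X i \<omega>, Y i \<omega>)) {1..n} \<and>
     (\<lambda>\<omega>. \<sigma> (\<lambda>i. X i \<omega>) (\<lambda>i. Y i \<omega>)) \<in> measurable M (count_space UNIV) \<and>
     (\<forall>\<omega>\<in>space M. spmi_best_response n tau c (\<lambda>i. X i \<omega>) (\<lambda>i. Y i \<omega>)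
                      (\<sigma> (\<lambda>i. X i \<omega>) (\<lambda>i. Y i \<omega>)))
     \<longrightarrow> (\<integral>\<omega>. spmi_principal_util tau c (\<lambda>i. X i \<omega>) (\<sigma> (\<lambda>i. X i \<omega>) (\<lambda>i. Y i \<omega>)) \<partial>M)
         \<ge> 1/2 * (\<integral>\<omega>. Max (insert 0 ((\<lambda>i. X i \<omega> - c i) ` {1..n})) \<partial>M)"
proof -
  obtain tau where tau0: "tau \<ge> 0" and taueq: "tau = (\<Sum>i\<in>{1..n}. \<integral>x. max 0 (x - c i - tau) \<partial>D i)"
    using tau_exists[OF D_prob D_mean] by blast
  show ?thesis
  proof (intro exI[of _ tau] conjI allI impI tau0)
    fix M :: "'a measure" and X Y :: "nat \<Rightarrow> 'a \<Rightarrow> real" and \<sigma> :: "(nat \<Rightarrow> real) \<Rightarrow> (nat \<Rightarrow> real) \<Rightarrow> nat option"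
    assume H: "prob_space M \<and>
     (\<forall>i\<in>{1..n}. X i \<in> borel_measurable M \<and> Y i \<in> borel_measurable M \<and>
                  distr M borel (X i) = D i \<and>
                  (\<forall>\<omega>\<in>space M. X i \<omega> \<ge> 0 \<and> Y i \<omega> \<ge> 0)) \<and>
     prob_space.indep_vars M (\<lambda>_. borel \<Otimes>\<^sub>M borel) (\<lambda>i \<omega>. (X i \<omega>, Y i \<omega>)) {1..n} \<and>
     (\<lambda>\<omega>. \<sigma> (\<lambda>i. X i \<omega>) (\<lambda>i. Y i \<omega>)) \<in> measurable M (count_space UNIV) \<and>
     (\<forall>\<omega>\<in>space M. spmi_best_response n tau c (\<lambda>i. X i \<omega>) (\<lambda>i. Y i \<omega>)
                      (\<sigma> (\<lambda>i. X i \<omega>) (\<lambda>i. Y i \<omega>)))"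
    have pM: "prob_space M" using H by blast
    have XY: "\<forall>i\<in>{1..n}. X i \<in> borel_measurable M \<and> Y i \<in> borel_measurable M \<and>
                  distr M borel (X i) = D i \<and>
                  (\<forall>\<omega>\<in>space M. X i \<omega> \<ge> 0 \<and> Y i \<omega> \<ge> 0)" using H by blast
    have ind: "prob_space.indep_vars M (\<lambda>_. borel \<Otimes>\<^sub>M borel) (\<lambda>i \<omega>. (X i \<omega>, Y i \<omega>)) {1..n}"
      using H by blast
    have sm: "(\<lambda>\<omega>. \<sigma> (\<lambda>i. X i \<omega>) (\<lambda>i. Y i \<omega>)) \<in> measurable M (count_space UNIV)" using H by blast
    have br: "\<forall>\<omega>\<in>space M. spmi_best_response n tau c (\<lambda>i. X i \<omega>) (\<lambda>i. Y i \<omega>)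
                      (\<sigma> (\<lambda>i. X i \<omega>) (\<lambda>i. Y i \<omega>))" using H by blast
    interpret prob_space M by (rule pM)
    define I where "I = {1..n}"
    have fI: "finite I" unfolding I_def by simp
    define s where "s \<omega> = \<sigma> (\<lambda>i. X i \<omega>) (\<lambda>i. Y i \<omega>)" for \<omega>
    define PU where "PU \<omega> = spmi_principal_util tau c (\<lambda>i. X i \<omega>) (s \<omega>)" for \<omega>
    define b where "b j \<omega> = (if X j \<omega> - c j < tau then 1 else 0 :: real)" for j \<omega>
    define e where "e i = (\<integral>\<omega>. max 0 (X i \<omega> - c i - tau) \<partial>M)" for i
    define p where "p j = (\<integral>\<omega>. b j \<omega> \<partial>M)" for j
    define R where "R \<omega> = tau * (1 - (\<Prod>j\<in>I. b j \<omega>)) + (\<Sum>i\<in>I. max 0 (X i \<omega> - c i - tau) * (\<Prod>j\<in>I-{i}. b j \<omega>))" for \<omega>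
    have Xm[measurable]: "X i \<in> borel_measurable M" if "i \<in> I" for i using XY that unfolding I_def by blast
    have intX: "integrable M (X i)" if i: "i \<in> I" for i
    proof -
      have "integrable (distr M borel (X i)) (\<lambda>x. x)" using D_mean XY i unfolding I_def by simp
      then show ?thesis by (subst (asm) integrable_distr_eq) (auto simp: i)
    qed
    have eD: "e i = (\<integral>x. max 0 (x - c i - tau) \<partial>D i)" if i: "i \<in> I" for i
    proof -
      have "(\<integral>x. max 0 (x - c i - tau) \<partial>distr M borel (X i)) = e i"
        unfolding e_def by (rule integral_distr) (auto simp: i)
      then show ?thesis using XY i unfolding I_def by simp
    qed
    have tauE: "tau = (\<Sum>i\<in>I. e i)" using taueq eD unfolding I_def by simp
    have indX: "indep_vars (\<lambda>_. borel) X I"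
    proof -
      have "indep_vars (\<lambda>_. borel) (\<lambda>i \<omega>. fst (X i \<omega>, Y i \<omega>)) I"
        by (rule indep_vars_compose2[OF ind[folded I_def]]) simp
      then show ?thesis by simp
    qed
    have indG: "indep_vars (\<lambda>_. borel) (\<lambda>j \<omega>. g j (X j \<omega>)) I"
      if "\<And>j. g j \<in> borel_measurable borel" for g :: "nat \<Rightarrow> real \<Rightarrow> real"
      by (rule indep_vars_compose2[OF indX]) (use that in auto)
    have bm[measurable]: "b j \<in> borel_measurable M" if "j \<in> I" for j
      unfolding b_def using that by measurable
    have intb: "integrable M (b j)" if "j \<in> I" for j
      by (rule integrable_const_bound[where B=1]) (use that in \<open>auto simp: b_def\<close>)
    have intm: "integrable M (\<lambda>\<omega>. max 0 (X i \<omega> - c i - tau))" if "i \<in> I" for i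
      using intX[OF that] by (intro integrable_max integrable_diff) auto
    have p01: "0 \<le> p j \<and> p j \<le> 1" if "j \<in> I" for j
    proof
      show "0 \<le> p j" using Bochner_Integration.integral_nonneg[where M=M and f="b j"] by (simp add: p_def b_def)
      have "p j \<le> (\<integral>\<omega>. 1 \<partial>M)" unfolding p_def
        by (rule integral_mono) (auto simp: b_def intb[OF that])
      then show "p j \<le> 1" by (simp add: prob_space)
    qed
    have e0: "e i \<ge> 0" for i unfolding e_def by (rule Bochner_Integration.integral_nonneg) auto
    have Pb: "(\<integral>\<omega>. (\<Prod>j\<in>I. b j \<omega>) \<partial>M) = (\<Prod>j\<in>I. p j)"
      and intPb: "integrable M (\<lambda>\<omega>. \<Prod>j\<in>I. b j \<omega>)"
    proof -
      have "indep_vars (\<lambda>_. borel) (\<lambda>j \<omega>. (\<lambda>j x. if x - c j < tau then 1 else 0 :: real) j (X j \<omega>)) I"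
        by (rule indG) measurable
      then have ib: "indep_vars (\<lambda>_. borel) b I" unfolding b_def[abs_def] by simp
      show "(\<integral>\<omega>. (\<Prod>j\<in>I. b j \<omega>) \<partial>M) = (\<Prod>j\<in>I. p j)"
        unfolding p_def by (rule indep_vars_lebesgue_integral[OF fI ib intb])
      show "integrable M (\<lambda>\<omega>. \<Prod>j\<in>I. b j \<omega>)"
        by (rule indep_vars_integrable[OF fI ib intb])
    qed
    have Pi: "(\<integral>\<omega>. max 0 (X i \<omega> - c i - tau) * (\<Prod>j\<in>I-{i}. b j \<omega>) \<partial>M) = e i * (\<Prod>j\<in>I-{i}. p j)"
      and intPi: "integrable M (\<lambda>\<omega>. max 0 (X i \<omega> - c i - tau) * (\<Prod>j\<in>I-{i}. b j \<omega>))"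
      if i: "i \<in> I" for i
    proof -
      define h where "h j \<omega> = (if j = i then max 0 (X j \<omega> - c j - tau) else b j \<omega>)" for j \<omega>
      have "indep_vars (\<lambda>_. borel) (\<lambda>j \<omega>. (\<lambda>j x. if j = i then max 0 (x - c j - tau) else (if x - c j < tau then 1 else 0 :: real)) j (X j \<omega>)) I"
        by (rule indG) measurable
      then have ih: "indep_vars (\<lambda>_. borel) h I" unfolding h_def[abs_def] b_def[abs_def] by simp
      have inth: "integrable M (h j)" if "j \<in> I" for j
        unfolding h_def using intm[OF that] intb[OF that] by (cases "j = i") (auto simp: if_distrib)
      have ph: "(\<Prod>j\<in>I. h j \<omega>) = max 0 (X i \<omega> - c i - tau) * (\<Prod>j\<in>I-{i}. b j \<omega>)" for \<omega>
      proof -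
        have "(\<Prod>j\<in>I. h j \<omega>) = h i \<omega> * (\<Prod>j\<in>I-{i}. h j \<omega>)" by (rule prod.remove[OF fI i])
        also have "(\<Prod>j\<in>I-{i}. h j \<omega>) = (\<Prod>j\<in>I-{i}. b j \<omega>)" by (rule prod.cong) (auto simp: h_def)
        finally show ?thesis by (simp add: h_def)
      qed
      have eh: "(\<integral>\<omega>. h j \<omega> \<partial>M) = (if j = i then e i else p j)" for j
        unfolding h_def e_def p_def by (cases "j = i") auto
      have "(\<integral>\<omega>. (\<Prod>j\<in>I. h j \<omega>) \<partial>M) = (\<Prod>j\<in>I. \<integral>\<omega>. h j \<omega> \<partial>M)"
        by (rule indep_vars_lebesgue_integral[OF fI ih inth])
      also have "\<dots> = (\<integral>\<omega>. h i \<omega> \<partial>M) * (\<Prod>j\<in>I-{i}. \<integral>\<omega>. h j \<omega> \<partial>M)" by (rule prod.remove[OF fI i])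
      also have "\<dots> = e i * (\<Prod>j\<in>I-{i}. p j)" by (simp add: eh)
      finally show "(\<integral>\<omega>. max 0 (X i \<omega> - c i - tau) * (\<Prod>j\<in>I-{i}. b j \<omega>) \<partial>M) = e i * (\<Prod>j\<in>I-{i}. p j)"
        by (simp add: ph)
      show "integrable M (\<lambda>\<omega>. max 0 (X i \<omega> - c i - tau) * (\<Prod>j\<in>I-{i}. b j \<omega>))"
        using indep_vars_integrable[OF fI ih inth] by (simp add: ph)
    qed
    have intR: "integrable M R" unfolding R_def
      using intPb intPi by (intro Bochner_Integration.integrable_add Bochner_Integration.integrable_mult_right Bochner_Integration.integrable_diff Bochner_Integration.integrable_sum finite_measure.integrable_const finite_measure_axioms) auto
    have ER: "(\<integral>\<omega>. R \<omega> \<partial>M) = tau * (1 - (\<Prod>j\<in>I. p j)) + (\<Sum>i\<in>I. e i * (\<Prod>j\<in>I-{i}. p j))"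
    proof -
      have "(\<integral>\<omega>. R \<omega> \<partial>M) = (\<integral>\<omega>. tau * (1 - (\<Prod>j\<in>I. b j \<omega>)) \<partial>M) + (\<integral>\<omega>. (\<Sum>i\<in>I. max 0 (X i \<omega> - c i - tau) * (\<Prod>j\<in>I-{i}. b j \<omega>)) \<partial>M)"
        unfolding R_def using intPb intPi
        by (intro Bochner_Integration.integral_add Bochner_Integration.integrable_mult_right Bochner_Integration.integrable_diff Bochner_Integration.integrable_sum finite_measure.integrable_const finite_measure_axioms) auto
      also have "(\<integral>\<omega>. tau * (1 - (\<Prod>j\<in>I. b j \<omega>)) \<partial>M) = tau * (1 - (\<Prod>j\<in>I. p j))"
        using intPb Pb by (simp add: prob_space)
      also have "(\<integral>\<omega>. (\<Sum>i\<in>I. max 0 (X i \<omega> - c i - tau) * (\<Prod>j\<in>I-{i}. b j \<omega>)) \<partial>M) = (\<Sum>i\<in>I. e i * (\<Prod>j\<in>I-{i}. p j))"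
        using intPi Pi by (simp add: integral_sum)
      finally show ?thesis .
    qed
    have ERtau: "(\<integral>\<omega>. R \<omega> \<partial>M) \<ge> tau"
    proof -
      have le: "(\<Prod>j\<in>I. p j) \<le> (\<Prod>j\<in>I-{i}. p j)" if i: "i \<in> I" for i
      proof -
        have "(\<Prod>j\<in>I. p j) = p i * (\<Prod>j\<in>I-{i}. p j)" by (rule prod.remove[OF fI i])
        moreover have "0 \<le> (\<Prod>j\<in>I-{i}. p j)" using p01 by (intro prod_nonneg) auto
        ultimately show ?thesis using p01[OF i] by (simp add: mult_left_le_one_le)
      qed
      have "tau * (\<Prod>j\<in>I. p j) = (\<Sum>i\<in>I. e i * (\<Prod>j\<in>I. p j))" using tauE by (simp add: sum_distrib_right)
      also have "\<dots> \<le> (\<Sum>i\<in>I. e i * (\<Prod>j\<in>I-{i}. p j))"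
        using le e0 by (intro sum_mono mult_left_mono) auto
      finally show ?thesis unfolding ER by (simp add: algebra_simps)
    qed
    have sval: "valid_signal n (s \<omega>)" if "\<omega> \<in> space M" for \<omega>
      using br that unfolding s_def spmi_best_response_def by blast
    have PUm: "PU \<in> borel_measurable M"
    proof -
      let ?J = "insert None (Some ` I)"
      have sJ: "s \<in> measurable M (count_space ?J)"
        unfolding measurable_count_space_eq2_countable
      proof
        show "s \<in> space M \<rightarrow> ?J" using sval unfolding valid_signal_def I_def by auto
        show "\<forall>a\<in>?J. s -` {a} \<inter> space M \<in> sets M"
          using measurable_sets[OF sm[folded s_def[abs_def]]] by auto
      qed
      have "(\<lambda>\<omega>. spmi_principal_util tau c (\<lambda>i. X i \<omega>) j) \<in> borel_measurable M" if "j \<in> ?J" for j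
        using that by (auto simp: spmi_principal_util_def)
      from measurable_compose_countable'[OF this sJ] show ?thesis
        unfolding PU_def[abs_def] by simp
    qed
    have intPU: "integrable M PU"
    proof (rule Bochner_Integration.integrable_bound[OF _ PUm])
      show "integrable M (\<lambda>\<omega>. \<Sum>i\<in>I. X i \<omega> + c i)"
        using intX by (intro Bochner_Integration.integrable_sum Bochner_Integration.integrable_add finite_measure.integrable_const finite_measure_axioms) auto
      show "AE \<omega> in M. norm (PU \<omega>) \<le> norm (\<Sum>i\<in>I. X i \<omega> + c i)"
      proof (rule AE_I2)
        fix \<omega> assume w: "\<omega> \<in> space M"
        have nn: "\<forall>i\<in>I. X i \<omega> + c i \<ge> 0" using XY cost_nonneg w unfolding I_def by force
        have "\<bar>PU \<omega>\<bar> \<le> (\<Sum>i\<in>I. X i \<omega> + c i)"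
        proof (cases "s \<omega>")
          case None then show ?thesis using nn by (simp add: PU_def spmi_principal_util_def sum_nonneg)
        next
          case (Some j)
          then have j: "j \<in> I" using sval[OF w] unfolding valid_signal_def I_def by auto
          have "\<bar>PU \<omega>\<bar> \<le> X j \<omega> + c j"
            using Some XY cost_nonneg w j unfolding PU_def spmi_principal_util_def I_def by force
          also have "\<dots> \<le> (\<Sum>i\<in>I. X i \<omega> + c i)" by (rule member_le_sum[OF j _ fI]) (use nn in auto)
          finally show ?thesis .
        qed
        then show "norm (PU \<omega>) \<le> norm (\<Sum>i\<in>I. X i \<omega> + c i)" by simp
      qed
    qed
    have PUR: "R \<omega> \<le> PU \<omega>" if w: "\<omega> \<in> space M" for \<omega>
    proof -
      have "\<forall>i\<in>{1..n}. Y i \<omega> \<ge> 0" using XY w by blast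
      from pointwise[OF br[rule_format, OF w] this tau0] show ?thesis
        unfolding R_def PU_def s_def b_def I_def by simp
    qed
    have EPU: "(\<integral>\<omega>. PU \<omega> \<partial>M) \<ge> tau"
      using integral_mono[OF intR intPU PUR] ERtau by linarith
    have EMax: "(\<integral>\<omega>. Max (insert 0 ((\<lambda>i. X i \<omega> - c i) ` {1..n})) \<partial>M) \<le> 2 * tau"
    proof -
      have "(\<integral>\<omega>. Max (insert 0 ((\<lambda>i. X i \<omega> - c i) ` {1..n})) \<partial>M) \<le> (\<integral>\<omega>. tau + (\<Sum>i\<in>I. max 0 (X i \<omega> - c i - tau)) \<partial>M)"
      proof (rule integral_mono')
        show "integrable M (\<lambda>\<omega>. tau + (\<Sum>i\<in>I. max 0 (X i \<omega> - c i - tau)))"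
          using intm by (intro Bochner_Integration.integrable_add Bochner_Integration.integrable_sum finite_measure.integrable_const finite_measure_axioms) auto
        fix \<omega> assume w: "\<omega> \<in> space M"
        show "0 \<le> tau + (\<Sum>i\<in>I. max 0 (X i \<omega> - c i - tau))" using tau0 by (simp add: sum_nonneg)
        show "Max (insert 0 ((\<lambda>i. X i \<omega> - c i) ` {1..n})) \<le> tau + (\<Sum>i\<in>I. max 0 (X i \<omega> - c i - tau))"
        proof (subst Max_le_iff, simp, simp, intro ballI)
          fix a assume "a \<in> insert 0 ((\<lambda>i. X i \<omega> - c i) ` {1..n})"
          then show "a \<le> tau + (\<Sum>i\<in>I. max 0 (X i \<omega> - c i - tau))"
          proof
            assume "a = 0" then show ?thesis using tau0 by (simp add: sum_nonneg)
          next
            assume "a \<in> (\<lambda>i. X i \<omega> - c i) ` {1..n}"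
            then obtain i where i: "i \<in> I" and a: "a = X i \<omega> - c i" unfolding I_def by auto
            have "max 0 (X i \<omega> - c i - tau) \<le> (\<Sum>i\<in>I. max 0 (X i \<omega> - c i - tau))"
              by (rule member_le_sum[OF i _ fI]) auto
            then show ?thesis using a by linarith
          qed
        qed
      qed
      also have "\<dots> = tau + (\<Sum>i\<in>I. e i)"
        using intm by (simp add: integral_sum prob_space e_def)
      finally show ?thesis using tauE by simp
    qed
    show "(\<integral>\<omega>. spmi_principal_util tau c (\<lambda>i. X i \<omega>) (\<sigma> (\<lambda>i. X i \<omega>) (\<lambda>i. Y i \<omega>)) \<partial>M)
         \<ge> 1/2 * (\<integral>\<omega>. Max (insert 0 ((\<lambda>i. X i \<omega> - c i) ` {1..n})) \<partial>M)"
      using EPU EMax unfolding PU_def s_def by simp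
  qed
qed


end
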